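(* Let $X$ be an infinite discrete space and $G$ a subgroup of $\mathrm S(X)$ with the permutation topology $\tau_\partial$. Let $\mathcal U_X$ be the maximal equiuniformity on $X$, $\mathcal U$ the uniformity on $G$ defined below, and $L\wedge R$ the Roelcke uniformity of $G$. (1) Suppose that for any points $x_1,\dots,x_n\in X$, $n\in\mathbb N$, and any $g,h\in G$ with $h(x_k)\in \mathrm{St}_{x_1,\dots,x_n}\,g(x_k)$ for $k=1,\dots,n$, there exist $f\in\mathrm{St}_{x_1,\dots,x_n}$ and $g'\in g\,\mathrm{St}_{x_1,\dots,x_n}$ with $h=f\circ g'$. Then $L\wedge R=\mathcal U$. (2) If $L\wedge R=\mathcal U$ and $\mathcal U_X$ is totally bounded, then $G$ is Roelcke precompact and the Roelcke compactification of $G$ is the closure of $\imath(G)$ in $(\beta_GX)^X$. (3) Suppose $L\wedge R=\mathcal U$ and $\mathcal U_X$ is totally bounded, and suppose that for every point $x\in\beta_GX\setminus X$ and every entourage $U$ of $\tilde{\mathcal U}_X$ there exist points $x_1,\dots,x_n\in X$ and an entourage $V$ of $\tilde{\mathcal U}_X$ such that for every $g\in G$ $$\{h\in G\mid (g(x_k),h(x_k))\in V,\ k=1,\dots,n\}\subset\{h\in G\mid (g(x),h(x))\in U\}.$$ Then $\mathcal U=\tilde{\mathcal U}$ and the Roelcke compactification of $(G,\tau_\partial)$ is the enveloping Ellis semigroup of the action $G\curvearrowright\beta_GX$, i.e. the closure of $\jmath(G)$ in $(\beta_GX)^{\beta_GX}$.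
   Context: $\tau_\partial$: group topology with identity neighbourhood base the pointwise stabilizers $\mathrm{St}_{x_1,\dots,x_n}=\{g\mid g(x_i)=x_i\}$. The maximal equiuniformity $\mathcal U_X$ has as base the partitions $\{\mathrm{St}_{x_1,\dots,x_n}x\mid x\in X\}$ of $X$ into orbits of stabilizers, $x_1,\dots,x_n\in X$. $\beta_GX$ is the completion of $X$ with respect to $\mathcal U_X$ (when totally bounded, the maximal equivariant compactification), $\tilde{\mathcal U}_X$ the extension of $\mathcal U_X$ to $\beta_GX$; each $g\in G$ extends continuously to $\beta_GX$. $\imath:G\to X^X\subset(\beta_GX)^X$, $\imath(g)=(g(x))_{x\in X}$, and $\jmath:G\to(\beta_GX)^{\beta_GX}$, $\jmath(g)=(g(x))_{x\in\beta_GX}$. $\mathcal U$ is the restriction to $\imath(G)=G$ of the product uniformity on $X^X$ of copies of $\mathcal U_X$ (base: coverings $\{\{h\mid (g(x_k),h(x_k))\in\mathrm U,\ k\le n\}\mid g\in G\}$); $\tilde{\mathcal U}$ is the restriction to $\jmath(G)=G$ of the product uniformity on $(\beta_GX)^{\beta_GX}$ of copies of $\tilde{\mathcal U}_X$. The Roelcke uniformity $L\wedge R$ is the greatest lower bound of the left and right uniformities; $G$ is Roelcke precompact if it is totally bounded, and then the Roelcke compactification is the completion of $G$ with respect to $L\wedge R$. *)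

theory Defs
  imports Main "HOL-Library.FuncSet"
begin

definition uniformity_on :: "'a set \<Rightarrow> ('a \<times> 'a) set set \<Rightarrow> bool" where
  "uniformity_on A \<U> \<longleftrightarrow>
     \<U> \<noteq> {} \<and>
     (\<forall>E\<in>\<U>. Id_on A \<subseteq> E \<and> E \<subseteq> A \<times> A) \<and>
     (\<forall>E\<in>\<U>. \<forall>F. E \<subseteq> F \<and> F \<subseteq> A \<times> A \<longrightarrow> F \<in> \<U>) \<and>
     (\<forall>E\<in>\<U>. \<forall>F\<in>\<U>. E \<inter> F \<in> \<U>) \<and>
     (\<forall>E\<in>\<U>. E\<inverse> \<in> \<U>) \<and>
     (\<forall>E\<in>\<U>. \<exists>F\<in>\<U>. F O F \<subseteq> E)"

definition gen_unif :: "'a set \<Rightarrow> ('a \<times> 'a) set set \<Rightarrow> ('a \<times> 'a) set set" where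
  "gen_unif A \<B> = {E. E \<subseteq> A \<times> A \<and> (\<exists>B\<in>\<B>. B \<subseteq> E)}"

definition unif_glb :: "'a set \<Rightarrow> ('a \<times> 'a) set set \<Rightarrow> ('a \<times> 'a) set set \<Rightarrow> ('a \<times> 'a) set set \<Rightarrow> bool" where
  "unif_glb A \<U>1 \<U>2 \<W> \<longleftrightarrow>
     uniformity_on A \<W> \<and> \<W> \<subseteq> \<U>1 \<and> \<W> \<subseteq> \<U>2 \<and>
     (\<forall>\<V>. uniformity_on A \<V> \<and> \<V> \<subseteq> \<U>1 \<and> \<V> \<subseteq> \<U>2 \<longrightarrow> \<V> \<subseteq> \<W>)"

definition totally_bounded_unif :: "'a set \<Rightarrow> ('a \<times> 'a) set set \<Rightarrow> bool" where
  "totally_bounded_unif A \<U> \<longleftrightarrow>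
     (\<forall>E\<in>\<U>. \<exists>F. finite F \<and> F \<subseteq> A \<and> A \<subseteq> (\<Union>y\<in>F. E `` {y}))"

definition unif_closure :: "'a set \<Rightarrow> ('a \<times> 'a) set set \<Rightarrow> 'a set \<Rightarrow> 'a set" where
  "unif_closure B \<V> S = {y \<in> B. \<forall>E\<in>\<V>. E `` {y} \<inter> S \<noteq> {}}"

definition cauchy_filter :: "'a set \<Rightarrow> ('a \<times> 'a) set set \<Rightarrow> 'a filter \<Rightarrow> bool" where
  "cauchy_filter B \<V> F \<longleftrightarrow>
     F \<noteq> bot \<and> eventually (\<lambda>x. x \<in> B) F \<and>
     (\<forall>E\<in>\<V>. \<exists>S. eventually (\<lambda>x. x \<in> S) F \<and> S \<times> S \<subseteq> E)"

definition complete_unif :: "'a set \<Rightarrow> ('a \<times> 'a) set set \<Rightarrow> bool" where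
  "complete_unif B \<V> \<longleftrightarrow>
     (\<forall>F. cauchy_filter B \<V> F \<longrightarrow> (\<exists>y\<in>B. \<forall>E\<in>\<V>. eventually (\<lambda>x. (y, x) \<in> E) F))"

definition separated_unif :: "'a set \<Rightarrow> ('a \<times> 'a) set set \<Rightarrow> bool" where
  "separated_unif B \<V> \<longleftrightarrow> (\<forall>x\<in>B. \<forall>y\<in>B. (\<forall>E\<in>\<V>. (x, y) \<in> E) \<longrightarrow> x = y)"

definition unif_continuous :: "'a set \<Rightarrow> ('a \<times> 'a) set set \<Rightarrow> 'b set \<Rightarrow> ('b \<times> 'b) set set \<Rightarrow> ('a \<Rightarrow> 'b) \<Rightarrow> bool" where
  "unif_continuous A \<U> B \<V> f \<longleftrightarrow>
     f ` A \<subseteq> B \<and> (\<forall>D\<in>\<V>. \<exists>E\<in>\<U>. \<forall>(a, b)\<in>E. (f a, f b) \<in> D)"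

definition unif_embedding :: "'a set \<Rightarrow> ('a \<times> 'a) set set \<Rightarrow> 'b set \<Rightarrow> ('b \<times> 'b) set set \<Rightarrow> ('a \<Rightarrow> 'b) \<Rightarrow> bool" where
  "unif_embedding A \<U> B \<V> f \<longleftrightarrow>
     f ` A \<subseteq> B \<and> inj_on f A \<and>
     \<U> = {E. E \<subseteq> A \<times> A \<and> (\<exists>D\<in>\<V>. {(a, b) \<in> A \<times> A. (f a, f b) \<in> D} \<subseteq> E)}"

definition is_completion :: "'a set \<Rightarrow> ('a \<times> 'a) set set \<Rightarrow> ('a \<Rightarrow> 'b) \<Rightarrow> 'b set \<Rightarrow> ('b \<times> 'b) set set \<Rightarrow> bool" where
  "is_completion A \<U> f B \<V> \<longleftrightarrow>
     uniformity_on B \<V> \<and> unif_embedding A \<U> B \<V> f \<and>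
     unif_closure B \<V> (f ` A) = B \<and> complete_unif B \<V> \<and> separated_unif B \<V>"

definition prod_unif :: "'i set \<Rightarrow> 'b set \<Rightarrow> ('b \<times> 'b) set set \<Rightarrow> (('i \<Rightarrow> 'b) \<times> ('i \<Rightarrow> 'b)) set set" where
  "prod_unif I B \<V> = gen_unif (Pi\<^sub>E I (\<lambda>_. B))
     {{(\<phi>, \<psi>) \<in> Pi\<^sub>E I (\<lambda>_. B) \<times> Pi\<^sub>E I (\<lambda>_. B). \<forall>i\<in>F. (\<phi> i, \<psi> i) \<in> V} | F V.
        finite F \<and> F \<subseteq> I \<and> V \<in> \<V>}"

definition restrict_unif :: "'a set \<Rightarrow> ('a \<times> 'a) set set \<Rightarrow> ('a \<times> 'a) set set" where
  "restrict_unif C \<W> = {E \<inter> (C \<times> C) | E. E \<in> \<W>}"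

section \<open>Permutation groups on X = UNIV\<close>

definition perm_group :: "('a \<Rightarrow> 'a) set \<Rightarrow> bool" where
  "perm_group G \<longleftrightarrow> G \<subseteq> {f. bij f} \<and> id \<in> G \<and>
     (\<forall>f\<in>G. \<forall>g\<in>G. f \<circ> g \<in> G) \<and> (\<forall>f\<in>G. inv f \<in> G)"

definition St :: "('a \<Rightarrow> 'a) set \<Rightarrow> 'a list \<Rightarrow> ('a \<Rightarrow> 'a) set" where
  "St G xs = {g \<in> G. \<forall>x\<in>set xs. g x = x}"

text \<open>Partition of X into St_{xs}-orbits, as an equivalence relation.\<close>
definition orb_rel :: "('a \<Rightarrow> 'a) set \<Rightarrow> 'a list \<Rightarrow> ('a \<times> 'a) set" where
  "orb_rel G xs = {(x, y). \<exists>f\<in>St G xs. y = f x}"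

definition UX :: "('a \<Rightarrow> 'a) set \<Rightarrow> ('a \<times> 'a) set set" where
  "UX G = gen_unif UNIV {orb_rel G xs | xs. True}"

definition left_unif :: "('a \<Rightarrow> 'a) set \<Rightarrow> (('a \<Rightarrow> 'a) \<times> ('a \<Rightarrow> 'a)) set set" where
  "left_unif G = gen_unif G {{(g, h) \<in> G \<times> G. \<exists>s\<in>St G xs. h = g \<circ> s} | xs. True}"

definition right_unif :: "('a \<Rightarrow> 'a) set \<Rightarrow> (('a \<Rightarrow> 'a) \<times> ('a \<Rightarrow> 'a)) set set" where
  "right_unif G = gen_unif G {{(g, h) \<in> G \<times> G. \<exists>s\<in>St G xs. h = s \<circ> g} | xs. True}"

definition roelcke_unif :: "('a \<Rightarrow> 'a) set \<Rightarrow> (('a \<Rightarrow> 'a) \<times> ('a \<Rightarrow> 'a)) set set" where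
  "roelcke_unif G = (THE \<W>. unif_glb G (left_unif G) (right_unif G) \<W>)"

text \<open>The uniformity \<U> on G: restriction of the product uniformity of copies of U_X on X^X.\<close>
definition UG :: "('a \<Rightarrow> 'a) set \<Rightarrow> (('a \<Rightarrow> 'a) \<times> ('a \<Rightarrow> 'a)) set set" where
  "UG G = gen_unif G {{(g, h) \<in> G \<times> G. \<forall>x\<in>set xs. (g x, h x) \<in> W} | xs W. W \<in> UX G}"

text \<open>The uniformity \<tilde>\<U> on G: restriction of the product uniformity of copies of the
  completion uniformity on (beta_G X)^(beta_G X); ext g is the extension of g.\<close>
definition UGt :: "('a \<Rightarrow> 'a) set \<Rightarrow> 'b set \<Rightarrow> ('b \<times> 'b) set set \<Rightarrow> (('a \<Rightarrow> 'a) \<Rightarrow> 'b \<Rightarrow> 'b)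
     \<Rightarrow> (('a \<Rightarrow> 'a) \<times> ('a \<Rightarrow> 'a)) set set" where
  "UGt G B \<V> ext = gen_unif G
     {{(g, h) \<in> G \<times> G. \<forall>y\<in>set ys. (ext g y, ext h y) \<in> W} | ys W. set ys \<subseteq> B \<and> W \<in> \<V>}"

end

theory Submission
  imports Defs
begin



lemma unifD:
  assumes u: "uniformity_on A U"
  shows "U \<noteq> {}"
    and "\<And>E. E \<in> U \<Longrightarrow> Id_on A \<subseteq> E"
    and "\<And>E. E \<in> U \<Longrightarrow> E \<subseteq> A \<times> A"
    and "\<And>E F. E \<in> U \<Longrightarrow> E \<subseteq> F \<Longrightarrow> F \<subseteq> A \<times> A \<Longrightarrow> F \<in> U"
    and "\<And>E F. E \<in> U \<Longrightarrow> F \<in> U \<Longrightarrow> E \<inter> F \<in> U"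
    and "\<And>E. E \<in> U \<Longrightarrow> E\<inverse> \<in> U"
    and "\<And>E. E \<in> U \<Longrightarrow> \<exists>F\<in>U. F O F \<subseteq> E"
proof -
  have d: "U \<noteq> {} \<and>
     (\<forall>E\<in>U. Id_on A \<subseteq> E \<and> E \<subseteq> A \<times> A) \<and>
     (\<forall>E\<in>U. \<forall>F. E \<subseteq> F \<and> F \<subseteq> A \<times> A \<longrightarrow> F \<in> U) \<and>
     (\<forall>E\<in>U. \<forall>F\<in>U. E \<inter> F \<in> U) \<and>
     (\<forall>E\<in>U. E\<inverse> \<in> U) \<and>
     (\<forall>E\<in>U. \<exists>F\<in>U. F O F \<subseteq> E)" using u unfolding uniformity_on_def .
  have d1: "U \<noteq> {}" using d by (elim conjE) assumption
  have d2: "\<forall>E\<in>U. Id_on A \<subseteq> E \<and> E \<subseteq> A \<times> A" using d by (elim conjE) assumption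
  have d3: "\<forall>E\<in>U. \<forall>F. E \<subseteq> F \<and> F \<subseteq> A \<times> A \<longrightarrow> F \<in> U" using d by (elim conjE) assumption
  have d4: "\<forall>E\<in>U. \<forall>F\<in>U. E \<inter> F \<in> U" using d by (elim conjE) assumption
  have d5: "\<forall>E\<in>U. E\<inverse> \<in> U" using d by (elim conjE) assumption
  have d6: "\<forall>E\<in>U. \<exists>F\<in>U. F O F \<subseteq> E" using d by (elim conjE) assumption
  show "U \<noteq> {}" by (fact d1)
  show "\<And>E. E \<in> U \<Longrightarrow> Id_on A \<subseteq> E" using d2 by blast
  show "\<And>E. E \<in> U \<Longrightarrow> E \<subseteq> A \<times> A" using d2 by blast
  show "\<And>E F. E \<in> U \<Longrightarrow> E \<subseteq> F \<Longrightarrow> F \<subseteq> A \<times> A \<Longrightarrow> F \<in> U" using d3 by blast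
  show "\<And>E F. E \<in> U \<Longrightarrow> F \<in> U \<Longrightarrow> E \<inter> F \<in> U" using d4 by blast
  show "\<And>E. E \<in> U \<Longrightarrow> E\<inverse> \<in> U" using d5 by blast
  show "\<And>E. E \<in> U \<Longrightarrow> \<exists>F\<in>U. F O F \<subseteq> E" using d6 by blast
qed

lemma unifI:
  assumes "U \<noteq> {}"
    and "\<And>E. E \<in> U \<Longrightarrow> Id_on A \<subseteq> E \<and> E \<subseteq> A \<times> A"
    and "\<And>E F. E \<in> U \<Longrightarrow> E \<subseteq> F \<Longrightarrow> F \<subseteq> A \<times> A \<Longrightarrow> F \<in> U"
    and "\<And>E F. E \<in> U \<Longrightarrow> F \<in> U \<Longrightarrow> E \<inter> F \<in> U"
    and "\<And>E. E \<in> U \<Longrightarrow> E\<inverse> \<in> U"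
    and "\<And>E. E \<in> U \<Longrightarrow> \<exists>F\<in>U. F O F \<subseteq> E"
  shows "uniformity_on A U"
  unfolding uniformity_on_def using assms by auto

definition basic :: "'i set \<Rightarrow> 'b set \<Rightarrow> 'i set \<Rightarrow> ('b \<times> 'b) set \<Rightarrow> (('i \<Rightarrow> 'b) \<times> ('i \<Rightarrow> 'b)) set" where
  "basic I B F D = {(\<phi>, \<psi>) \<in> Pi\<^sub>E I (\<lambda>_. B) \<times> Pi\<^sub>E I (\<lambda>_. B). \<forall>i\<in>F. (\<phi> i, \<psi> i) \<in> D}"

lemma prod_unif_iff:
  "E \<in> prod_unif I B V \<longleftrightarrow> E \<subseteq> Pi\<^sub>E I (\<lambda>_. B) \<times> Pi\<^sub>E I (\<lambda>_. B) \<and>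
     (\<exists>F D. finite F \<and> F \<subseteq> I \<and> D \<in> V \<and> basic I B F D \<subseteq> E)"
  unfolding prod_unif_def gen_unif_def basic_def by blast

lemma basic_sub: "basic I B F D \<subseteq> Pi\<^sub>E I (\<lambda>_. B) \<times> Pi\<^sub>E I (\<lambda>_. B)"
  by (auto simp: basic_def)

lemma basic_in: "finite F \<Longrightarrow> F \<subseteq> I \<Longrightarrow> D \<in> V \<Longrightarrow> basic I B F D \<in> prod_unif I B V"
  unfolding prod_unif_iff using basic_sub[of I B F D] by blast

lemma basic_mono: "F \<subseteq> F' \<Longrightarrow> D' \<subseteq> D \<Longrightarrow> basic I B F' D' \<subseteq> basic I B F D"
  by (auto simp: basic_def)



lemma prod_uniformity:
  assumes u: "uniformity_on B V"
  shows "uniformity_on (Pi\<^sub>E I (\<lambda>_. B)) (prod_unif I B V)"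
proof -
  let ?P = "Pi\<^sub>E I (\<lambda>_. B)"
  from unifD(1)[OF u] obtain D0 where D0: "D0 \<in> V" by blast
  have c1: "prod_unif I B V \<noteq> {}" using basic_in[of "{}" I D0 V B] D0 by auto
  have c2: "Id_on ?P \<subseteq> E \<and> E \<subseteq> ?P \<times> ?P" if h: "E \<in> prod_unif I B V" for E
  proof -
    obtain F D where E: "E \<subseteq> ?P \<times> ?P" "finite F" "F \<subseteq> I" "D \<in> V" "basic I B F D \<subseteq> E"
      using h by (auto simp: prod_unif_iff)
    have "Id_on B \<subseteq> D" using unifD(2)[OF u] \<open>D\<in>V\<close> by blast
    hence "Id_on ?P \<subseteq> basic I B F D" using \<open>F \<subseteq> I\<close> by (auto simp: basic_def Id_on_def PiE_iff)
    thus ?thesis using E by blast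
  qed
  have c3: "F \<in> prod_unif I B V" if h: "E \<in> prod_unif I B V" "E \<subseteq> F" "F \<subseteq> ?P \<times> ?P" for E F
  proof -
    obtain F0 D where "finite F0" "F0 \<subseteq> I" "D \<in> V" "basic I B F0 D \<subseteq> E"
      using h(1) unfolding prod_unif_iff by blast
    then show ?thesis unfolding prod_unif_iff using h(2,3) by blast
  qed
  have c4: "E \<inter> E' \<in> prod_unif I B V" if h: "E \<in> prod_unif I B V" "E' \<in> prod_unif I B V" for E E'
  proof -
    obtain F D where E: "E \<subseteq> ?P \<times> ?P" "finite F" "F \<subseteq> I" "D \<in> V" "basic I B F D \<subseteq> E"
      using h by (auto simp: prod_unif_iff)
    obtain F' D' where E': "E' \<subseteq> ?P \<times> ?P" "finite F'" "F' \<subseteq> I" "D' \<in> V" "basic I B F' D' \<subseteq> E'"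
      using h by (auto simp: prod_unif_iff)
    have "D \<inter> D' \<in> V" using unifD(5)[OF u] E E' by blast
    moreover have "basic I B (F \<union> F') (D \<inter> D') \<subseteq> E \<inter> E'"
      using E E' basic_mono[of F "F \<union> F'" "D \<inter> D'" D I B] basic_mono[of F' "F \<union> F'" "D \<inter> D'" D' I B] by blast
    moreover have "finite (F \<union> F')" "F \<union> F' \<subseteq> I" using E E' by auto
    ultimately show ?thesis using E E' unfolding prod_unif_iff by blast
  qed
  have c5: "E\<inverse> \<in> prod_unif I B V" if h: "E \<in> prod_unif I B V" for E
  proof -
    obtain F D where E: "E \<subseteq> ?P \<times> ?P" "finite F" "F \<subseteq> I" "D \<in> V" "basic I B F D \<subseteq> E"
      using h by (auto simp: prod_unif_iff)
    have "D\<inverse> \<in> V" using unifD(6)[OF u] E by blast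
    moreover have "basic I B F (D\<inverse>) \<subseteq> E\<inverse>" using E(5) by (auto simp: basic_def)
    moreover have "E\<inverse> \<subseteq> ?P \<times> ?P" using E by blast
    ultimately show ?thesis using E unfolding prod_unif_iff by blast
  qed
  have c6: "\<exists>F'\<in>prod_unif I B V. F' O F' \<subseteq> E" if h: "E \<in> prod_unif I B V" for E
  proof -
    obtain F D where E: "E \<subseteq> ?P \<times> ?P" "finite F" "F \<subseteq> I" "D \<in> V" "basic I B F D \<subseteq> E"
      using h by (auto simp: prod_unif_iff)
    obtain D' where D': "D' \<in> V" "D' O D' \<subseteq> D" using unifD(7)[OF u] E by blast
    have "basic I B F D' O basic I B F D' \<subseteq> basic I B F D"
    proof
      fix p assume "p \<in> basic I B F D' O basic I B F D'"
      then obtain x y z where p: "p = (x,z)" "(x,y) \<in> basic I B F D'" "(y,z) \<in> basic I B F D'" by (rule relcompE)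
      have "(x i, z i) \<in> D" if i: "i \<in> F" for i
      proof -
        have "(x i, y i) \<in> D'" "(y i, z i) \<in> D'" using p(2,3) i unfolding basic_def by auto
        hence "(x i, z i) \<in> D' O D'" by (rule relcompI)
        thus ?thesis by (rule subsetD[OF D'(2)])
      qed
      moreover have "x \<in> Pi\<^sub>E I (\<lambda>_. B)" "z \<in> Pi\<^sub>E I (\<lambda>_. B)" using p(2,3) unfolding basic_def by auto
      ultimately show "p \<in> basic I B F D" using p(1) unfolding basic_def by simp
    qed
    moreover have "basic I B F D' \<in> prod_unif I B V" by (rule basic_in[OF E(2) E(3) D'(1)])
    ultimately show ?thesis using E(5) by blast
  qed
  show ?thesis by (rule unifI[OF c1 c2 c3 c4 c5 c6])
qed



lemma restrict_uniformity:
  assumes u: "uniformity_on P U" and C: "C \<subseteq> P"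
  shows "uniformity_on C (restrict_unif C U)"
proof -
  have c1: "restrict_unif C U \<noteq> {}" using unifD(1)[OF u] unfolding restrict_unif_def by blast
  have c2: "Id_on C \<subseteq> E \<and> E \<subseteq> C \<times> C" if h: "E \<in> restrict_unif C U" for E
  proof -
    obtain E0 where E0: "E0 \<in> U" "E = E0 \<inter> C \<times> C" using h unfolding restrict_unif_def by blast
    have "Id_on P \<subseteq> E0" using unifD(2)[OF u E0(1)] .
    hence "Id_on C \<subseteq> E0" using C unfolding Id_on_def by blast
    thus ?thesis using E0(2) unfolding Id_on_def by blast
  qed
  have c3: "F \<in> restrict_unif C U" if h: "E \<in> restrict_unif C U" "E \<subseteq> F" "F \<subseteq> C \<times> C" for E F
  proof -
    obtain E0 where E0: "E0 \<in> U" "E = E0 \<inter> C \<times> C" using h unfolding restrict_unif_def by blast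
    have "E0 \<subseteq> P \<times> P" using unifD(3)[OF u E0(1)] .
    moreover have "F \<subseteq> P \<times> P" using h(3) C by blast
    ultimately have "E0 \<union> F \<subseteq> P \<times> P" by blast
    hence "E0 \<union> F \<in> U" using unifD(4)[OF u E0(1), of "E0 \<union> F"] by blast
    moreover have "F = (E0 \<union> F) \<inter> C \<times> C" using h E0 by blast
    ultimately show ?thesis unfolding restrict_unif_def by blast
  qed
  have c4: "E \<inter> E' \<in> restrict_unif C U" if h: "E \<in> restrict_unif C U" "E' \<in> restrict_unif C U" for E E'
  proof -
    obtain E0 where E0: "E0 \<in> U" "E = E0 \<inter> C \<times> C" using h unfolding restrict_unif_def by blast
    obtain E1 where E1: "E1 \<in> U" "E' = E1 \<inter> C \<times> C" using h unfolding restrict_unif_def by blast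
    have "E0 \<inter> E1 \<in> U" using unifD(5)[OF u] E0 E1 by blast
    moreover have "E \<inter> E' = (E0 \<inter> E1) \<inter> C \<times> C" using E0 E1 by blast
    ultimately show ?thesis unfolding restrict_unif_def by blast
  qed
  have c5: "E\<inverse> \<in> restrict_unif C U" if h: "E \<in> restrict_unif C U" for E
  proof -
    obtain E0 where E0: "E0 \<in> U" "E = E0 \<inter> C \<times> C" using h unfolding restrict_unif_def by blast
    have "E0\<inverse> \<in> U" using unifD(6)[OF u] E0 by blast
    moreover have "E\<inverse> = E0\<inverse> \<inter> C \<times> C" using E0 by blast
    ultimately show ?thesis unfolding restrict_unif_def by blast
  qed
  have c6: "\<exists>F\<in>restrict_unif C U. F O F \<subseteq> E" if h: "E \<in> restrict_unif C U" for E
  proof -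
    obtain E0 where E0: "E0 \<in> U" "E = E0 \<inter> C \<times> C" using h unfolding restrict_unif_def by blast
    obtain F0 where F0: "F0 \<in> U" "F0 O F0 \<subseteq> E0" using unifD(7)[OF u] E0 by blast
    have "(F0 \<inter> C \<times> C) O (F0 \<inter> C \<times> C) \<subseteq> E" using F0(2) E0(2) by auto
    moreover have "F0 \<inter> C \<times> C \<in> restrict_unif C U" using F0(1) unfolding restrict_unif_def by blast
    ultimately show ?thesis by blast
  qed
  show ?thesis by (rule unifI[OF c1 c2 c3 c4 c5 c6])
qed



lemma prod_complete:
  assumes u: "uniformity_on B V" and cB: "complete_unif B V"
    and F: "cauchy_filter (Pi\<^sub>E I (\<lambda>_. B)) (prod_unif I B V) F"
  shows "\<exists>y\<in>Pi\<^sub>E I (\<lambda>_. B). \<forall>E\<in>prod_unif I B V. eventually (\<lambda>x. (y, x) \<in> E) F"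
proof -
  let ?P = "Pi\<^sub>E I (\<lambda>_. B)"
  have Fnb: "F \<noteq> bot" and FP: "eventually (\<lambda>x. x \<in> ?P) F"
    and FC: "\<And>E. E \<in> prod_unif I B V \<Longrightarrow> \<exists>S. eventually (\<lambda>x. x \<in> S) F \<and> S \<times> S \<subseteq> E"
    using F unfolding cauchy_filter_def by blast+
  have lim: "\<exists>b\<in>B. \<forall>D\<in>V. eventually (\<lambda>x. (b, x i) \<in> D) F" if i: "i \<in> I" for i
  proof -
    let ?Fi = "filtermap (\<lambda>\<phi>. \<phi> i) F"
    have "cauchy_filter B V ?Fi" unfolding cauchy_filter_def
    proof (intro conjI ballI)
      show "?Fi \<noteq> bot" using Fnb by (simp add: filtermap_bot_iff)
      show "eventually (\<lambda>x. x \<in> B) ?Fi" unfolding eventually_filtermap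
        using FP by (rule eventually_mono) (use i in auto)
    next
      fix D assume D: "D \<in> V"
      have "basic I B {i} D \<in> prod_unif I B V" using i D by (intro basic_in) auto
      then obtain S where S: "eventually (\<lambda>x. x \<in> S) F" "S \<times> S \<subseteq> basic I B {i} D" using FC by blast
      have "eventually (\<lambda>x. x \<in> (\<lambda>\<phi>. \<phi> i) ` S) ?Fi" unfolding eventually_filtermap
        using S(1) by (rule eventually_mono) auto
      moreover have "(\<lambda>\<phi>. \<phi> i) ` S \<times> (\<lambda>\<phi>. \<phi> i) ` S \<subseteq> D"
      proof (clarsimp)
        fix a b assume "a \<in> S" "b \<in> S"
        hence "(a, b) \<in> basic I B {i} D" using S(2) by blast
        thus "(a i, b i) \<in> D" unfolding basic_def by simp
      qed
      ultimately show "\<exists>S. eventually (\<lambda>x. x \<in> S) ?Fi \<and> S \<times> S \<subseteq> D" by blast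
    qed
    then obtain b where "b \<in> B" "\<forall>D\<in>V. eventually (\<lambda>x. (b, x) \<in> D) ?Fi"
      using cB unfolding complete_unif_def by blast
    thus ?thesis unfolding eventually_filtermap by blast
  qed
  define y where "y = (\<lambda>i. if i \<in> I then (SOME b. b \<in> B \<and> (\<forall>D\<in>V. eventually (\<lambda>x. (b, x i) \<in> D) F)) else undefined)"
  have yi: "y i \<in> B \<and> (\<forall>D\<in>V. eventually (\<lambda>x. (y i, x i) \<in> D) F)" if i: "i \<in> I" for i
  proof -
    have "\<exists>b. b \<in> B \<and> (\<forall>D\<in>V. eventually (\<lambda>x. (b, x i) \<in> D) F)" using lim[OF i] by blast
    hence "(SOME b. b \<in> B \<and> (\<forall>D\<in>V. eventually (\<lambda>x. (b, x i) \<in> D) F)) \<in> B \<and>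
       (\<forall>D\<in>V. eventually (\<lambda>x. ((SOME b. b \<in> B \<and> (\<forall>D\<in>V. eventually (\<lambda>x. (b, x i) \<in> D) F)), x i) \<in> D) F)"
      by (rule someI_ex)
    thus ?thesis unfolding y_def using i by simp
  qed
  have yP: "y \<in> ?P" using yi unfolding y_def PiE_def extensional_def by (auto simp: Pi_def)
  have "eventually (\<lambda>x. (y, x) \<in> E) F" if E: "E \<in> prod_unif I B V" for E
  proof -
    obtain F0 D where E0: "finite F0" "F0 \<subseteq> I" "D \<in> V" "basic I B F0 D \<subseteq> E"
      using E unfolding prod_unif_iff by blast
    have "eventually (\<lambda>x. \<forall>i\<in>F0. (y i, x i) \<in> D) F"
      using E0 yi by (subst eventually_ball_finite_distrib) auto
    hence "eventually (\<lambda>x. (y, x) \<in> basic I B F0 D) F"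
      using FP by eventually_elim (use yP in \<open>auto simp: basic_def\<close>)
    thus ?thesis by (rule eventually_mono) (use E0(4) in blast)
  qed
  thus ?thesis using yP by blast
qed



lemma completion_general:
  fixes j :: "'g \<Rightarrow> 'i \<Rightarrow> 'b"
  assumes u: "uniformity_on B V" and cB: "complete_unif B V" and sB: "separated_unif B V"
    and jG: "\<And>g. g \<in> G \<Longrightarrow> j g \<in> Pi\<^sub>E I (\<lambda>_. B)" and inj: "inj_on j G"
    and W: "W = gen_unif G {{(g,h) \<in> G \<times> G. \<forall>i\<in>set ys. (j g i, j h i) \<in> D} | ys D. set ys \<subseteq> I \<and> D \<in> V}"
    and Cdef: "C = unif_closure (Pi\<^sub>E I (\<lambda>_. B)) (prod_unif I B V) (j ` G)"
  shows "is_completion G W j C (restrict_unif C (prod_unif I B V))"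
proof -
  let ?P = "Pi\<^sub>E I (\<lambda>_. B)"
  let ?PU = "prod_unif I B V"
  let ?R = "restrict_unif C ?PU"
  have pu: "uniformity_on ?P ?PU" by (rule prod_uniformity[OF u])
  have CP: "C \<subseteq> ?P" unfolding Cdef unif_closure_def by blast
  have Cmem: "y \<in> C \<longleftrightarrow> y \<in> ?P \<and> (\<forall>E\<in>?PU. E `` {y} \<inter> j ` G \<noteq> {})" for y
    unfolding Cdef unif_closure_def by blast
  have jGC: "j ` G \<subseteq> C"
  proof
    fix y assume "y \<in> j ` G"
    then obtain g where g: "g \<in> G" "y = j g" by blast
    have yP: "y \<in> ?P" using jG g by simp
    have "y \<in> E `` {y}" if "E \<in> ?PU" for E using unifD(2)[OF pu that] yP by (auto simp: Id_on_def)
    thus "y \<in> C" using Cmem yP \<open>y \<in> j ` G\<close> by blast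
  qed
  have ru: "uniformity_on C ?R" by (rule restrict_uniformity[OF pu CP])
  have Rmem: "E \<in> ?R \<longleftrightarrow> (\<exists>E0\<in>?PU. E = E0 \<inter> C \<times> C)" for E
    unfolding restrict_unif_def by blast
  define pb where "pb D = {(a, b) \<in> G \<times> G. (j a, j b) \<in> D}" for D
  have pb_basic: "{(g,h) \<in> G \<times> G. \<forall>i\<in>set ys. (j g i, j h i) \<in> D} = pb (basic I B (set ys) D)" for ys D
    unfolding pb_def basic_def using jG by auto
  have pb_restr: "pb (E0 \<inter> C \<times> C) = pb E0" for E0 unfolding pb_def using jGC by auto
  have pb_mono: "D1 \<subseteq> D2 \<Longrightarrow> pb D1 \<subseteq> pb D2" for D1 D2 unfolding pb_def by auto
  have Wmem: "E \<in> W \<longleftrightarrow> E \<subseteq> G \<times> G \<and> (\<exists>ys D. set ys \<subseteq> I \<and> D \<in> V \<and> pb (basic I B (set ys) D) \<subseteq> E)" for E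
    unfolding W gen_unif_def pb_basic[symmetric] by blast
  have emb: "unif_embedding G W C ?R j"
    unfolding unif_embedding_def
  proof (intro conjI)
    show "j ` G \<subseteq> C" by (fact jGC)
    show "inj_on j G" by (fact inj)
    show "W = {E. E \<subseteq> G \<times> G \<and> (\<exists>D\<in>?R. {(a, b) \<in> G \<times> G. (j a, j b) \<in> D} \<subseteq> E)}"
    proof (intro set_eqI iffI)
      fix E assume E: "E \<in> W"
      then obtain ys D where yD: "set ys \<subseteq> I" "D \<in> V" "pb (basic I B (set ys) D) \<subseteq> E" and EG: "E \<subseteq> G \<times> G"
        unfolding Wmem by blast
      have "basic I B (set ys) D \<in> ?PU" using yD by (intro basic_in) auto
      hence "basic I B (set ys) D \<inter> C \<times> C \<in> ?R" unfolding Rmem by blast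
      moreover have "pb (basic I B (set ys) D \<inter> C \<times> C) \<subseteq> E" using yD(3) pb_restr by simp
      ultimately show "E \<in> {E. E \<subseteq> G \<times> G \<and> (\<exists>D\<in>?R. {(a, b) \<in> G \<times> G. (j a, j b) \<in> D} \<subseteq> E)}"
        using EG unfolding pb_def by blast
    next
      fix E assume "E \<in> {E. E \<subseteq> G \<times> G \<and> (\<exists>D\<in>?R. {(a, b) \<in> G \<times> G. (j a, j b) \<in> D} \<subseteq> E)}"
      hence EG: "E \<subseteq> G \<times> G" and "\<exists>D\<in>?R. {(a, b) \<in> G \<times> G. (j a, j b) \<in> D} \<subseteq> E" by blast+
      then obtain D1 where D1: "D1 \<in> ?R" "pb D1 \<subseteq> E" unfolding pb_def by blast
      then obtain E0 where E0: "E0 \<in> ?PU" "D1 = E0 \<inter> C \<times> C" unfolding Rmem by blast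
      then obtain F0 D where FD: "finite F0" "F0 \<subseteq> I" "D \<in> V" "basic I B F0 D \<subseteq> E0"
        unfolding prod_unif_iff by blast
      obtain ys where ys: "set ys = F0" using finite_list[OF FD(1)] by blast
      have "pb (basic I B (set ys) D) \<subseteq> pb E0" using pb_mono FD(4) ys by blast
      also have "\<dots> = pb D1" using E0(2) pb_restr by simp
      finally have "pb (basic I B (set ys) D) \<subseteq> E" using D1(2) by blast
      thus "E \<in> W" unfolding Wmem using EG ys FD by blast
    qed
  qed
  have clo: "unif_closure C ?R (j ` G) = C"
  proof -
    have "E `` {y} \<inter> j ` G \<noteq> {}" if y: "y \<in> C" and E: "E \<in> ?R" for y E
    proof -
      obtain E0 where E0: "E0 \<in> ?PU" "E = E0 \<inter> C \<times> C" using E unfolding Rmem by blast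
      then obtain z where z: "z \<in> E0 `` {y}" "z \<in> j ` G" using y Cmem by blast
      have "z \<in> C" using z(2) jGC by blast
      thus ?thesis using z y E0(2) by blast
    qed
    thus ?thesis unfolding unif_closure_def by blast
  qed
  have comp: "complete_unif C ?R"
    unfolding complete_unif_def
  proof (intro allI impI)
    fix F assume F: "cauchy_filter C ?R F"
    have Fnb: "F \<noteq> bot" and FC: "eventually (\<lambda>x. x \<in> C) F"
      and FS: "\<And>E. E \<in> ?R \<Longrightarrow> \<exists>S. eventually (\<lambda>x. x \<in> S) F \<and> S \<times> S \<subseteq> E"
      using F unfolding cauchy_filter_def by blast+
    have "cauchy_filter ?P ?PU F" unfolding cauchy_filter_def
    proof (intro conjI ballI)
      show "F \<noteq> bot" by (fact Fnb)
      show "eventually (\<lambda>x. x \<in> ?P) F" using FC by (rule eventually_mono) (use CP in blast)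
    next
      fix E assume "E \<in> ?PU"
      hence "E \<inter> C \<times> C \<in> ?R" unfolding Rmem by blast
      then obtain S where "eventually (\<lambda>x. x \<in> S) F" "S \<times> S \<subseteq> E \<inter> C \<times> C" using FS by blast
      thus "\<exists>S. eventually (\<lambda>x. x \<in> S) F \<and> S \<times> S \<subseteq> E" by blast
    qed
    then obtain y where yP: "y \<in> ?P" and yl: "\<forall>E\<in>?PU. eventually (\<lambda>x. (y, x) \<in> E) F"
      using prod_complete[OF u cB] by blast
    have yC: "y \<in> C" unfolding Cmem
    proof (intro conjI ballI)
      show "y \<in> ?P" by (fact yP)
      fix E assume E: "E \<in> ?PU"
      obtain E1 where E1: "E1 \<in> ?PU" "E1 O E1 \<subseteq> E" using unifD(7)[OF pu E] by blast
      have "eventually (\<lambda>x. (y, x) \<in> E1 \<and> x \<in> C) F" using yl E1(1) FC eventually_conj by blast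
      hence "F = bot \<or> (\<exists>x. (y, x) \<in> E1 \<and> x \<in> C)" by (rule eventually_happens)
      then obtain x where x: "(y, x) \<in> E1" "x \<in> C" using Fnb by blast
      then obtain z where z: "z \<in> E1 `` {x}" "z \<in> j ` G" using Cmem E1(1) by blast
      have "(y, z) \<in> E1 O E1" using x(1) z(1) by blast
      hence "z \<in> E `` {y}" using E1(2) by blast
      thus "E `` {y} \<inter> j ` G \<noteq> {}" using z(2) by blast
    qed
    have "eventually (\<lambda>x. (y, x) \<in> E) F" if E: "E \<in> ?R" for E
    proof -
      obtain E0 where E0: "E0 \<in> ?PU" "E = E0 \<inter> C \<times> C" using E unfolding Rmem by blast
      have "eventually (\<lambda>x. (y, x) \<in> E0 \<and> x \<in> C) F" using yl E0(1) FC eventually_conj by blast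
      thus ?thesis by (rule eventually_mono) (use E0(2) yC in blast)
    qed
    thus "\<exists>y\<in>C. \<forall>E\<in>?R. eventually (\<lambda>x. (y, x) \<in> E) F" using yC by blast
  qed
  have sep: "separated_unif C ?R"
    unfolding separated_unif_def
  proof (intro ballI impI)
    fix x y assume x: "x \<in> C" and y: "y \<in> C" and all: "\<forall>E\<in>?R. (x, y) \<in> E"
    have xP: "x \<in> ?P" and yP: "y \<in> ?P" using x y CP by blast+
    have "x i = y i" for i
    proof (cases "i \<in> I")
      case True
      have "(x i, y i) \<in> D" if D: "D \<in> V" for D
      proof -
        have "basic I B {i} D \<in> ?PU" using True D by (intro basic_in) auto
        hence "basic I B {i} D \<inter> C \<times> C \<in> ?R" unfolding Rmem by blast
        hence "(x, y) \<in> basic I B {i} D" using all by blast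
        thus ?thesis unfolding basic_def by simp
      qed
      moreover have "x i \<in> B" "y i \<in> B" using xP yP True by auto
      ultimately show ?thesis using sB unfolding separated_unif_def by metis
    next
      case False
      have "x i = undefined" by (rule PiE_arb[OF xP False])
      moreover have "y i = undefined" by (rule PiE_arb[OF yP False])
      ultimately show ?thesis by simp
    qed
    thus "x = y" by (rule ext)
  qed
  show ?thesis unfolding is_completion_def using ru emb clo comp sep by blast
qed



lemma gen_unif_eq:
  assumes "\<And>b. b \<in> B1 \<Longrightarrow> \<exists>c\<in>B2. c \<subseteq> b" and "\<And>b. b \<in> B2 \<Longrightarrow> \<exists>c\<in>B1. c \<subseteq> b"
  shows "gen_unif A B1 = gen_unif A B2"
  unfolding gen_unif_def
proof (intro set_eqI iffI)
  fix E assume "E \<in> {E. E \<subseteq> A \<times> A \<and> (\<exists>B\<in>B1. B \<subseteq> E)}"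
  then obtain b where "E \<subseteq> A \<times> A" "b \<in> B1" "b \<subseteq> E" by blast
  moreover obtain c where "c \<in> B2" "c \<subseteq> b" using assms(1)[OF \<open>b \<in> B1\<close>] by blast
  ultimately show "E \<in> {E. E \<subseteq> A \<times> A \<and> (\<exists>B\<in>B2. B \<subseteq> E)}" by blast
next
  fix E assume "E \<in> {E. E \<subseteq> A \<times> A \<and> (\<exists>B\<in>B2. B \<subseteq> E)}"
  then obtain b where "E \<subseteq> A \<times> A" "b \<in> B2" "b \<subseteq> E" by blast
  moreover obtain c where "c \<in> B1" "c \<subseteq> b" using assms(2)[OF \<open>b \<in> B2\<close>] by blast
  ultimately show "E \<in> {E. E \<subseteq> A \<times> A \<and> (\<exists>B\<in>B1. B \<subseteq> E)}" by blast
qed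

context
  fixes G :: "('a \<Rightarrow> 'a) set"
  assumes pg: "perm_group G"
begin

lemma pgD: "f \<in> G \<Longrightarrow> bij f" "id \<in> G" "f \<in> G \<Longrightarrow> g \<in> G \<Longrightarrow> f \<circ> g \<in> G" "f \<in> G \<Longrightarrow> inv f \<in> G"
  using pg unfolding perm_group_def by blast+

lemma St_G: "f \<in> St G xs \<Longrightarrow> f \<in> G" unfolding St_def by blast

lemma id_St: "id \<in> St G xs" unfolding St_def using pgD(2) by simp

lemma St_fix: "f \<in> St G xs \<Longrightarrow> x \<in> set xs \<Longrightarrow> f x = x" unfolding St_def by blast

lemma St_mono: "set xs \<subseteq> set ys \<Longrightarrow> St G ys \<subseteq> St G xs" unfolding St_def by blast

lemma St_comp: "f \<in> St G xs \<Longrightarrow> g \<in> St G xs \<Longrightarrow> f \<circ> g \<in> St G xs"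
  unfolding St_def using pgD(3) by auto

lemma St_inv: assumes f: "f \<in> St G xs" shows "inv f \<in> St G xs"
proof -
  have fG: "f \<in> G" using f St_G by blast
  have bf: "bij f" using pgD(1)[OF fG] .
  have "inv f x = x" if "x \<in> set xs" for x
  proof -
    have "f x = x" using St_fix[OF f that] .
    hence "inv f (f x) = inv f x" by simp
    thus ?thesis using bij_is_inj[OF bf] by (simp add: inv_f_f)
  qed
  thus ?thesis unfolding St_def using pgD(4)[OF fG] by blast
qed

lemma orb_refl: "(x, x) \<in> orb_rel G xs"
proof -
  have "x = id x" by simp
  thus ?thesis unfolding orb_rel_def using id_St[of xs] by blast
qed

lemma orb_sym: assumes "(x, y) \<in> orb_rel G xs" shows "(y, x) \<in> orb_rel G xs"
proof -
  obtain f where f: "f \<in> St G xs" "y = f x" using assms unfolding orb_rel_def by blast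
  have "bij f" using pgD(1)[OF St_G[OF f(1)]] .
  hence "inj f" by (rule bij_is_inj)
  hence "x = inv f y" using f(2) by (simp add: inv_f_f)
  thus ?thesis using St_inv[OF f(1)] unfolding orb_rel_def by blast
qed

lemma orb_trans: assumes "(x, y) \<in> orb_rel G xs" "(y, z) \<in> orb_rel G xs" shows "(x, z) \<in> orb_rel G xs"
proof -
  obtain f where f: "f \<in> St G xs" "y = f x" using assms(1) unfolding orb_rel_def by blast
  obtain g where g: "g \<in> St G xs" "z = g y" using assms(2) unfolding orb_rel_def by blast
  have "z = (g \<circ> f) x" using f g by simp
  thus ?thesis using St_comp[OF g(1) f(1)] unfolding orb_rel_def by blast
qed

lemma orb_mono: "set xs \<subseteq> set ys \<Longrightarrow> orb_rel G ys \<subseteq> orb_rel G xs"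
  unfolding orb_rel_def using St_mono by blast

lemma UX_mem: "W \<in> UX G \<longleftrightarrow> (\<exists>xs. orb_rel G xs \<subseteq> W)"
  unfolding UX_def gen_unif_def by auto

lemma orb_UX: "orb_rel G xs \<in> UX G" using UX_mem by blast

lemma UX_Int: "W1 \<in> UX G \<Longrightarrow> W2 \<in> UX G \<Longrightarrow> W1 \<inter> W2 \<in> UX G"
proof -
  assume "W1 \<in> UX G" "W2 \<in> UX G"
  then obtain xs ys where "orb_rel G xs \<subseteq> W1" "orb_rel G ys \<subseteq> W2" unfolding UX_mem by blast
  moreover have "orb_rel G (xs @ ys) \<subseteq> orb_rel G xs" "orb_rel G (xs @ ys) \<subseteq> orb_rel G ys"
    by (auto intro!: orb_mono)
  ultimately have "orb_rel G (xs @ ys) \<subseteq> W1 \<inter> W2" by blast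
  thus ?thesis unfolding UX_mem by blast
qed

definition bs :: "'a list \<Rightarrow> (('a \<Rightarrow> 'a) \<times> ('a \<Rightarrow> 'a)) set" where
  "bs zs = {(g, h) \<in> G \<times> G. \<forall>x\<in>set zs. (g x, h x) \<in> orb_rel G zs}"

lemma UG_mem: "E \<in> UG G \<longleftrightarrow> E \<subseteq> G \<times> G \<and> (\<exists>zs. bs zs \<subseteq> E)"
proof
  assume E: "E \<in> UG G"
  then obtain xs W where xW: "W \<in> UX G" "{(g, h) \<in> G \<times> G. \<forall>x\<in>set xs. (g x, h x) \<in> W} \<subseteq> E" and EG: "E \<subseteq> G \<times> G"
    unfolding UG_def gen_unif_def by blast
  obtain ys where ys: "orb_rel G ys \<subseteq> W" using xW(1) UX_mem by blast
  have "orb_rel G (xs @ ys) \<subseteq> orb_rel G ys" by (auto intro!: orb_mono)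
  hence "bs (xs @ ys) \<subseteq> {(g, h) \<in> G \<times> G. \<forall>x\<in>set xs. (g x, h x) \<in> W}"
    using ys unfolding bs_def by auto
  thus "E \<subseteq> G \<times> G \<and> (\<exists>zs. bs zs \<subseteq> E)" using xW(2) EG by blast
next
  assume "E \<subseteq> G \<times> G \<and> (\<exists>zs. bs zs \<subseteq> E)"
  then obtain zs where "E \<subseteq> G \<times> G" "bs zs \<subseteq> E" by blast
  moreover have "bs zs \<in> {{(g, h) \<in> G \<times> G. \<forall>x\<in>set xs. (g x, h x) \<in> W} | xs W. W \<in> UX G}"
    unfolding bs_def using orb_UX by blast
  ultimately show "E \<in> UG G" unfolding UG_def gen_unif_def by blast
qed

lemma bs_mono: "bs (xs @ ys) \<subseteq> bs xs"
proof -
  have "orb_rel G (xs @ ys) \<subseteq> orb_rel G xs" by (auto intro!: orb_mono)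
  thus ?thesis unfolding bs_def by auto
qed

lemma bs_mono2: "bs (xs @ ys) \<subseteq> bs ys"
proof -
  have "orb_rel G (xs @ ys) \<subseteq> orb_rel G ys" by (auto intro!: orb_mono)
  thus ?thesis unfolding bs_def by auto
qed

lemma UG_uniformity: "uniformity_on G (UG G)"
proof (rule unifI)
  have "bs [] = G \<times> G" unfolding bs_def by auto
  hence "G \<times> G \<in> UG G" unfolding UG_mem by blast
  thus "UG G \<noteq> {}" by blast
next
  fix E assume "E \<in> UG G"
  then obtain zs where E: "E \<subseteq> G \<times> G" "bs zs \<subseteq> E" unfolding UG_mem by blast
  have "Id_on G \<subseteq> bs zs" unfolding bs_def Id_on_def using orb_refl by blast
  thus "Id_on G \<subseteq> E \<and> E \<subseteq> G \<times> G" using E by blast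
next
  fix E F assume "E \<in> UG G" "E \<subseteq> F" "F \<subseteq> G \<times> G"
  thus "F \<in> UG G" unfolding UG_mem by blast
next
  fix E F assume "E \<in> UG G" "F \<in> UG G"
  then obtain xs ys where "E \<subseteq> G \<times> G" "bs xs \<subseteq> E" "F \<subseteq> G \<times> G" "bs ys \<subseteq> F" unfolding UG_mem by blast
  moreover have "bs (xs @ ys) \<subseteq> bs xs" "bs (xs @ ys) \<subseteq> bs ys" by (rule bs_mono, rule bs_mono2)
  ultimately show "E \<inter> F \<in> UG G" unfolding UG_mem by blast
next
  fix E assume "E \<in> UG G"
  then obtain zs where E: "E \<subseteq> G \<times> G" "bs zs \<subseteq> E" unfolding UG_mem by blast
  have "bs zs \<subseteq> E\<inverse>"
  proof
    fix p assume "p \<in> bs zs"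
    then obtain g h where p: "p = (g, h)" "g \<in> G" "h \<in> G" "\<forall>x\<in>set zs. (g x, h x) \<in> orb_rel G zs"
      unfolding bs_def by blast
    have "(h, g) \<in> bs zs" unfolding bs_def using p orb_sym by blast
    thus "p \<in> E\<inverse>" using E(2) p(1) by blast
  qed
  thus "E\<inverse> \<in> UG G" unfolding UG_mem using E(1) by blast
next
  fix E assume "E \<in> UG G"
  then obtain zs where E: "E \<subseteq> G \<times> G" "bs zs \<subseteq> E" unfolding UG_mem by blast
  have "bs zs O bs zs \<subseteq> bs zs"
  proof
    fix p assume "p \<in> bs zs O bs zs"
    then obtain g k h where p: "p = (g, h)" "(g, k) \<in> bs zs" "(k, h) \<in> bs zs" by (rule relcompE)
    have "(g x, h x) \<in> orb_rel G zs" if "x \<in> set zs" for x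
      using p(2,3) that orb_trans unfolding bs_def by blast
    thus "p \<in> bs zs" using p unfolding bs_def by blast
  qed
  moreover have "bs zs \<in> UG G" unfolding UG_mem bs_def by blast
  ultimately show "\<exists>F\<in>UG G. F O F \<subseteq> E" using E(2) by blast
qed

end


context
  fixes G :: "('a \<Rightarrow> 'a) set"
  assumes pg: "perm_group G"
begin

lemma L_mem: "E \<in> left_unif G \<longleftrightarrow> E \<subseteq> G \<times> G \<and> (\<exists>xs. {(g, h) \<in> G \<times> G. \<exists>s\<in>St G xs. h = g \<circ> s} \<subseteq> E)"
  unfolding left_unif_def gen_unif_def by auto

lemma R_mem: "E \<in> right_unif G \<longleftrightarrow> E \<subseteq> G \<times> G \<and> (\<exists>xs. {(g, h) \<in> G \<times> G. \<exists>s\<in>St G xs. h = s \<circ> g} \<subseteq> E)"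
  unfolding right_unif_def gen_unif_def by auto

lemma UG_L: "UG G \<subseteq> left_unif G"
proof
  fix E assume "E \<in> UG G"
  then obtain zs where E: "E \<subseteq> G \<times> G" "bs G zs \<subseteq> E" unfolding UG_mem[OF pg] by blast
  have "{(g, h) \<in> G \<times> G. \<exists>s\<in>St G zs. h = g \<circ> s} \<subseteq> bs G zs"
  proof clarify
    fix g s assume g: "g \<in> G" "g \<circ> s \<in> G" and s: "s \<in> St G zs"
    have "(g x, (g \<circ> s) x) \<in> orb_rel G zs" if "x \<in> set zs" for x
      using St_fix[OF pg s that] orb_refl[OF pg] by simp
    thus "(g, g \<circ> s) \<in> bs G zs" unfolding bs_def[OF pg] using g by blast
  qed
  thus "E \<in> left_unif G" unfolding L_mem using E by blast
qed

lemma UG_R: "UG G \<subseteq> right_unif G"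
proof
  fix E assume "E \<in> UG G"
  then obtain zs where E: "E \<subseteq> G \<times> G" "bs G zs \<subseteq> E" unfolding UG_mem[OF pg] by blast
  have "{(g, h) \<in> G \<times> G. \<exists>s\<in>St G zs. h = s \<circ> g} \<subseteq> bs G zs"
  proof clarify
    fix g s assume g: "g \<in> G" "s \<circ> g \<in> G" and s: "s \<in> St G zs"
    have "(g x, (s \<circ> g) x) \<in> orb_rel G zs" for x
      using s unfolding orb_rel_def by auto
    thus "(g, s \<circ> g) \<in> bs G zs" using g by (simp add: bs_def[OF pg])
  qed
  thus "E \<in> right_unif G" unfolding R_mem using E by blast
qed

lemma part1:
  assumes hyp: "\<forall>xs g h. g \<in> G \<longrightarrow> h \<in> G \<longrightarrow>
        (\<forall>x\<in>set xs. \<exists>f\<in>St G xs. h x = f (g x)) \<longrightarrow>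
        (\<exists>f\<in>St G xs. \<exists>s\<in>St G xs. h = f \<circ> (g \<circ> s))"
  shows "roelcke_unif G = UG G"
proof -
  have maxi: "V \<subseteq> UG G" if V: "uniformity_on G V" "V \<subseteq> left_unif G" "V \<subseteq> right_unif G" for V
  proof
    fix E assume E: "E \<in> V"
    obtain F where F: "F \<in> V" "F O F \<subseteq> E" using unifD(7)[OF V(1) E] by blast
    obtain xs where xs: "{(g, h) \<in> G \<times> G. \<exists>s\<in>St G xs. h = g \<circ> s} \<subseteq> F"
      using F(1) V(2) L_mem[of F] by blast
    obtain ys where ys: "{(g, h) \<in> G \<times> G. \<exists>s\<in>St G ys. h = s \<circ> g} \<subseteq> F"
      using F(1) V(3) R_mem[of F] by blast
    let ?zs = "xs @ ys"
    have "bs G ?zs \<subseteq> E"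
    proof
      fix p assume "p \<in> bs G ?zs"
      then obtain g h where p: "p = (g, h)" and gh: "g \<in> G" "h \<in> G" "\<forall>x\<in>set ?zs. (g x, h x) \<in> orb_rel G ?zs"
        unfolding bs_def[OF pg] by blast
      have "\<forall>x\<in>set ?zs. \<exists>f\<in>St G ?zs. h x = f (g x)" using gh(3) unfolding orb_rel_def by simp
      from hyp[rule_format, OF gh(1) gh(2) bspec[OF this]] obtain f s
        where fs: "f \<in> St G ?zs" "s \<in> St G ?zs" "h = f \<circ> (g \<circ> s)" by blast
      have fy: "f \<in> St G ys" using fs(1) St_mono[OF pg, of ys ?zs] by auto
      have sx: "s \<in> St G xs" using fs(2) St_mono[OF pg, of xs ?zs] by auto
      have fgG: "f \<circ> g \<in> G" using pgD(3)[OF pg St_G[OF pg fy] gh(1)] .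
      have hh: "(f \<circ> g) \<circ> s = h" using fs(3) by (simp add: comp_assoc)
      have "(g, f \<circ> g) \<in> {(g, h) \<in> G \<times> G. \<exists>s\<in>St G ys. h = s \<circ> g}" using fy gh(1) fgG by blast
      hence 1: "(g, f \<circ> g) \<in> F" using ys by (rule subsetD[rotated])
      have "(f \<circ> g, h) \<in> {(g, h) \<in> G \<times> G. \<exists>s\<in>St G xs. h = g \<circ> s}" using sx hh gh(2) fgG by blast
      hence 2: "(f \<circ> g, h) \<in> F" using xs by (rule subsetD[rotated])
      have "(g, h) \<in> F O F" using 1 2 by (rule relcompI)
      thus "p \<in> E" using F(2) p by blast
    qed
    moreover have "E \<subseteq> G \<times> G" using unifD(3)[OF V(1) E] .
    ultimately show "E \<in> UG G" unfolding UG_mem[OF pg] by blast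
  qed
  have glb: "unif_glb G (left_unif G) (right_unif G) (UG G)"
    unfolding unif_glb_def
  proof (intro conjI allI impI)
    show "uniformity_on G (UG G)" by (rule UG_uniformity[OF pg])
    show "UG G \<subseteq> left_unif G" by (rule UG_L)
    show "UG G \<subseteq> right_unif G" by (rule UG_R)
    fix V assume "uniformity_on G V \<and> V \<subseteq> left_unif G \<and> V \<subseteq> right_unif G"
    thus "V \<subseteq> UG G" using maxi by blast
  qed
  show ?thesis unfolding roelcke_unif_def
  proof (rule the_equality)
    show "unif_glb G (left_unif G) (right_unif G) (UG G)" by (fact glb)
  next
    fix W assume W: "unif_glb G (left_unif G) (right_unif G) W"
    have W1: "uniformity_on G W" "W \<subseteq> left_unif G" "W \<subseteq> right_unif G"
      and W2: "\<And>V. uniformity_on G V \<and> V \<subseteq> left_unif G \<and> V \<subseteq> right_unif G \<Longrightarrow> V \<subseteq> W"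
      using W unfolding unif_glb_def by blast+
    have "W \<subseteq> UG G" by (rule maxi[OF W1])
    moreover have "UG G \<subseteq> W" using W2 UG_uniformity[OF pg] UG_L UG_R by blast
    ultimately show "W = UG G" by (rule subset_antisym)
  qed
qed

end


lemma UG_tb:
  assumes pg: "perm_group G" and tb: "totally_bounded_unif UNIV (UX G)"
  shows "totally_bounded_unif G (UG G)"
  unfolding totally_bounded_unif_def
proof
  fix E assume "E \<in> UG G"
  then obtain zs where E: "E \<subseteq> G \<times> G" "bs G zs \<subseteq> E" unfolding UG_mem[OF pg] by blast
  let ?O = "orb_rel G zs"
  obtain Fy where Fy: "finite Fy" "UNIV \<subseteq> (\<Union>y\<in>Fy. ?O `` {y})"
    using bspec[OF tb[unfolded totally_bounded_unif_def] orb_UX[OF pg, of zs]] by blast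
  define rep where "rep z = (SOME y. y \<in> Fy \<and> (y, z) \<in> ?O)" for z
  have rep: "rep z \<in> Fy \<and> (rep z, z) \<in> ?O" for z
  proof -
    have "z \<in> (\<Union>y\<in>Fy. ?O `` {y})" using Fy(2) by blast
    hence "\<exists>y. y \<in> Fy \<and> (y, z) \<in> ?O" by blast
    thus ?thesis unfolding rep_def by (rule someI_ex)
  qed
  define key where "key g = map (rep \<circ> g) zs" for g :: "'a \<Rightarrow> 'a"
  have "key ` G \<subseteq> {l. set l \<subseteq> Fy \<and> length l = length zs}"
    unfolding key_def using rep by auto
  hence finK: "finite (key ` G)" using finite_lists_length_eq[OF Fy(1), of "length zs"] finite_subset by blast
  define pick where "pick k = (SOME g. g \<in> G \<and> key g = k)" for k
  have pick: "pick (key h) \<in> G \<and> key (pick (key h)) = key h" if "h \<in> G" for h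
  proof -
    have "\<exists>g. g \<in> G \<and> key g = key h" using that by blast
    thus ?thesis unfolding pick_def by (rule someI_ex)
  qed
  let ?F = "pick ` key ` G"
  have "finite ?F" using finK by blast
  moreover have "?F \<subseteq> G" using pick by blast
  moreover have "G \<subseteq> (\<Union>y\<in>?F. E `` {y})"
  proof
    fix h assume h: "h \<in> G"
    let ?g = "pick (key h)"
    have g: "?g \<in> G" "key ?g = key h" using pick[OF h] by blast+
    have "(?g x, h x) \<in> ?O" if x: "x \<in> set zs" for x
    proof -
      have "rep (?g x) = rep (h x)" using g(2) x unfolding key_def by auto
      hence "(rep (h x), ?g x) \<in> ?O" "(rep (h x), h x) \<in> ?O" using rep by metis+
      thus ?thesis using orb_sym[OF pg] orb_trans[OF pg] by blast
    qed
    hence "(?g, h) \<in> bs G zs" unfolding bs_def[OF pg] using g(1) h by blast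
    hence "h \<in> E `` {?g}" using E(2) by blast
    moreover have "?g \<in> ?F" using h by blast
    ultimately show "h \<in> (\<Union>y\<in>?F. E `` {y})" by blast
  qed
  ultimately show "\<exists>F. finite F \<and> F \<subseteq> G \<and> G \<subseteq> (\<Union>y\<in>F. E `` {y})" by blast
qed



lemma completionD:
  assumes "is_completion UNIV (UX G) e B V"
  shows "uniformity_on B V" "complete_unif B V" "separated_unif B V" "inj e" "\<And>x. e x \<in> B"
    and "UX G = {E. E \<subseteq> UNIV \<times> UNIV \<and> (\<exists>D\<in>V. {(a, b) \<in> UNIV \<times> UNIV. (e a, e b) \<in> D} \<subseteq> E)}"
  using assms unfolding is_completion_def unif_embedding_def by blast+

lemma UX_pb:
  assumes c: "is_completion UNIV (UX G) e B V" and D: "D \<in> V"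
  shows "{(a, b). (e a, e b) \<in> D} \<in> UX G"
proof -
  have "{(a, b) \<in> UNIV \<times> UNIV. (e a, e b) \<in> D} \<subseteq> {(a, b). (e a, e b) \<in> D}" by blast
  hence "{(a, b). (e a, e b) \<in> D} \<in> {E. E \<subseteq> UNIV \<times> UNIV \<and> (\<exists>D\<in>V. {(a, b) \<in> UNIV \<times> UNIV. (e a, e b) \<in> D} \<subseteq> E)}"
    using D by blast
  thus ?thesis using completionD(6)[OF c] by simp
qed

lemma UX_D:
  assumes c: "is_completion UNIV (UX G) e B V" and W: "W \<in> UX G"
  obtains D where "D \<in> V" "\<And>a b. (e a, e b) \<in> D \<Longrightarrow> (a, b) \<in> W"
proof -
  have "W \<in> {E. E \<subseteq> UNIV \<times> UNIV \<and> (\<exists>D\<in>V. {(a, b) \<in> UNIV \<times> UNIV. (e a, e b) \<in> D} \<subseteq> E)}"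
    using W completionD(6)[OF c] by simp
  then obtain D where "D \<in> V" "{(a, b) \<in> UNIV \<times> UNIV. (e a, e b) \<in> D} \<subseteq> W" by blast
  thus ?thesis using that by blast
qed

lemma part2:
  fixes G :: "('a \<Rightarrow> 'a) set" and e :: "'a \<Rightarrow> 'b"
  assumes pg: "perm_group G" and c: "is_completion UNIV (UX G) e B V"
    and rU: "roelcke_unif G = UG G" and tb: "totally_bounded_unif UNIV (UX G)"
  shows "totally_bounded_unif G (roelcke_unif G) \<and>
       (let C = unif_closure (Pi\<^sub>E UNIV (\<lambda>_. B)) (prod_unif UNIV B V) ((\<lambda>g. e \<circ> g) ` G)
        in is_completion G (roelcke_unif G) (\<lambda>g. e \<circ> g) C
             (restrict_unif C (prod_unif UNIV B V)))"
proof
  show "totally_bounded_unif G (roelcke_unif G)" using UG_tb[OF pg tb] rU by simp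
  have eq: "UG G = gen_unif G {{(g,h) \<in> G \<times> G. \<forall>i\<in>set ys. ((e \<circ> g) i, (e \<circ> h) i) \<in> D} | ys D. set ys \<subseteq> UNIV \<and> D \<in> V}"
    unfolding UG_def
  proof (rule gen_unif_eq)
    fix b assume "b \<in> {{(g, h) \<in> G \<times> G. \<forall>x\<in>set xs. (g x, h x) \<in> W} | xs W. W \<in> UX G}"
    then obtain xs W where b: "b = {(g, h) \<in> G \<times> G. \<forall>x\<in>set xs. (g x, h x) \<in> W}" "W \<in> UX G" by blast
    obtain D where D: "D \<in> V" "\<And>a b. (e a, e b) \<in> D \<Longrightarrow> (a, b) \<in> W" using UX_D[OF c b(2)] by blast
    have "{(g,h) \<in> G \<times> G. \<forall>i\<in>set xs. ((e \<circ> g) i, (e \<circ> h) i) \<in> D} \<subseteq> b" unfolding b(1) using D(2) by auto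
    moreover have "{(g,h) \<in> G \<times> G. \<forall>i\<in>set xs. ((e \<circ> g) i, (e \<circ> h) i) \<in> D} \<in>
        {{(g,h) \<in> G \<times> G. \<forall>i\<in>set ys. ((e \<circ> g) i, (e \<circ> h) i) \<in> D} | ys D. set ys \<subseteq> UNIV \<and> D \<in> V}"
      using D(1) by blast
    ultimately show "\<exists>c\<in>{{(g,h) \<in> G \<times> G. \<forall>i\<in>set ys. ((e \<circ> g) i, (e \<circ> h) i) \<in> D} | ys D. set ys \<subseteq> UNIV \<and> D \<in> V}. c \<subseteq> b"
      by blast
  next
    fix b assume "b \<in> {{(g,h) \<in> G \<times> G. \<forall>i\<in>set ys. ((e \<circ> g) i, (e \<circ> h) i) \<in> D} | ys D. set ys \<subseteq> UNIV \<and> D \<in> V}"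
    then obtain ys D where b: "b = {(g,h) \<in> G \<times> G. \<forall>i\<in>set ys. ((e \<circ> g) i, (e \<circ> h) i) \<in> D}" "D \<in> V" by blast
    let ?W = "{(a, b). (e a, e b) \<in> D}"
    have W: "?W \<in> UX G" by (rule UX_pb[OF c b(2)])
    have "{(g, h) \<in> G \<times> G. \<forall>x\<in>set ys. (g x, h x) \<in> ?W} = b" unfolding b(1) by auto
    moreover have "{(g, h) \<in> G \<times> G. \<forall>x\<in>set ys. (g x, h x) \<in> ?W} \<in> {{(g, h) \<in> G \<times> G. \<forall>x\<in>set xs. (g x, h x) \<in> W} | xs W. W \<in> UX G}"
      using W by blast
    ultimately show "\<exists>c\<in>{{(g, h) \<in> G \<times> G. \<forall>x\<in>set xs. (g x, h x) \<in> W} | xs W. W \<in> UX G}. c \<subseteq> b" by blast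
  qed
  show "let C = unif_closure (Pi\<^sub>E UNIV (\<lambda>_. B)) (prod_unif UNIV B V) ((\<lambda>g. e \<circ> g) ` G)
        in is_completion G (roelcke_unif G) (\<lambda>g. e \<circ> g) C (restrict_unif C (prod_unif UNIV B V))"
    unfolding Let_def
  proof (rule completion_general[OF completionD(1-3)[OF c]])
    show "e \<circ> g \<in> Pi\<^sub>E UNIV (\<lambda>_. B)" if "g \<in> G" for g using completionD(5)[OF c] by auto
    show "inj_on (\<lambda>g. e \<circ> g) G"
    proof (rule inj_onI)
      fix g h assume "e \<circ> g = e \<circ> h"
      hence "e (g x) = e (h x)" for x by (metis comp_apply)
      hence "g x = h x" for x using completionD(4)[OF c] by (meson injD)
      thus "g = h" by (rule ext)
    qed
    show "roelcke_unif G = gen_unif G {{(g,h) \<in> G \<times> G. \<forall>i\<in>set ys. ((e \<circ> g) i, (e \<circ> h) i) \<in> D} | ys D. set ys \<subseteq> UNIV \<and> D \<in> V}"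
      using rU eq by simp
  qed simp
qed



lemma part3:
  fixes G :: "('a \<Rightarrow> 'a) set" and e :: "'a \<Rightarrow> 'b"
  assumes pg: "perm_group G" and c: "is_completion UNIV (UX G) e B V"
    and hext: "\<forall>g\<in>G. (\<forall>x. ext g (e x) = e (g x)) \<and> unif_continuous B V B V (ext g)"
    and rU: "roelcke_unif G = UG G"
    and H: "\<forall>x \<in> B - e ` UNIV. \<forall>U\<in>V. \<exists>xs V'. V' \<in> V \<and>
          (\<forall>g\<in>G. {h \<in> G. \<forall>y\<in>set xs. (e (g y), e (h y)) \<in> V'}
                   \<subseteq> {h \<in> G. (ext g x, ext h x) \<in> U})"
  shows "UG G = UGt G B V ext \<and>
       (let C = unif_closure (Pi\<^sub>E B (\<lambda>_. B)) (prod_unif B B V) ((\<lambda>g. restrict (ext g) B) ` G)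
        in is_completion G (roelcke_unif G) (\<lambda>g. restrict (ext g) B) C
             (restrict_unif C (prod_unif B B V)))"
proof -
  define bU where "bU xs W = {(g, h) \<in> G \<times> G. \<forall>x\<in>set xs. (g x, h x) \<in> W}" for xs W
  define bT where "bT ys D = {(g, h) \<in> G \<times> G. \<forall>y\<in>set ys. (ext g y, ext h y) \<in> D}" for ys D
  have ext_e: "ext g (e x) = e (g x)" if "g \<in> G" for g x using hext that by blast
  have single: "\<exists>xs W. W \<in> UX G \<and> bU xs W \<subseteq> bT [y] D" if y: "y \<in> B" and D: "D \<in> V" for y D
  proof (cases "y \<in> range e")
    case True
    then obtain x0 where x0: "y = e x0" by blast
    let ?W = "{(a, b). (e a, e b) \<in> D}"
    have "?W \<in> UX G" by (rule UX_pb[OF c D])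
    moreover have "bU [x0] ?W \<subseteq> bT [y] D" unfolding bU_def bT_def using x0 ext_e by auto
    ultimately show ?thesis by blast
  next
    case False
    then obtain xs V' where V': "V' \<in> V" "\<forall>g\<in>G. {h \<in> G. \<forall>y\<in>set xs. (e (g y), e (h y)) \<in> V'}
                   \<subseteq> {h \<in> G. (ext g y, ext h y) \<in> D}" using H y D by blast
    let ?W = "{(a, b). (e a, e b) \<in> V'}"
    have "?W \<in> UX G" by (rule UX_pb[OF c V'(1)])
    moreover have "bU xs ?W \<subseteq> bT [y] D"
    proof clarify
      fix g h assume "(g, h) \<in> bU xs ?W"
      hence gh: "g \<in> G" "h \<in> G" "\<forall>x\<in>set xs. (e (g x), e (h x)) \<in> V'" unfolding bU_def by auto
      hence "h \<in> {h \<in> G. (ext g y, ext h y) \<in> D}" using V'(2) by blast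
      thus "(g, h) \<in> bT [y] D" unfolding bT_def using gh by auto
    qed
    ultimately show ?thesis by blast
  qed
  have multi: "set ys \<subseteq> B \<Longrightarrow> \<exists>xs W. W \<in> UX G \<and> bU xs W \<subseteq> bT ys D" if D: "D \<in> V" for ys D
  proof (induction ys)
    case Nil
    have "UNIV \<in> UX G" using UX_mem[OF pg] by blast
    moreover have "bU [] UNIV \<subseteq> bT [] D" unfolding bU_def bT_def by auto
    ultimately show ?case by blast
  next
    case (Cons y ys)
    obtain xs1 W1 where 1: "W1 \<in> UX G" "bU xs1 W1 \<subseteq> bT ys D" using Cons by auto
    obtain xs2 W2 where 2: "W2 \<in> UX G" "bU xs2 W2 \<subseteq> bT [y] D" using single[OF _ D, of y] Cons.prems by auto
    have "W1 \<inter> W2 \<in> UX G" using UX_Int[OF pg 1(1) 2(1)] .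
    moreover have "bU (xs1 @ xs2) (W1 \<inter> W2) \<subseteq> bU xs1 W1 \<inter> bU xs2 W2" unfolding bU_def by auto
    moreover have "bT ys D \<inter> bT [y] D \<subseteq> bT (y # ys) D" unfolding bT_def by auto
    ultimately show ?case using 1(2) 2(2) by blast
  qed
  have eq1: "UG G = UGt G B V ext"
    unfolding UG_def UGt_def
  proof (rule gen_unif_eq)
    fix b assume "b \<in> {{(g, h) \<in> G \<times> G. \<forall>x\<in>set xs. (g x, h x) \<in> W} | xs W. W \<in> UX G}"
    then obtain xs W where b: "b = bU xs W" "W \<in> UX G" unfolding bU_def by blast
    obtain D where D: "D \<in> V" "\<And>a b. (e a, e b) \<in> D \<Longrightarrow> (a, b) \<in> W" using UX_D[OF c b(2)] by blast
    have "bT (map e xs) D \<subseteq> b" unfolding b(1) bU_def bT_def using D(2) ext_e by auto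
    moreover have "set (map e xs) \<subseteq> B" using completionD(5)[OF c] by auto
    ultimately show "\<exists>c\<in>{{(g, h) \<in> G \<times> G. \<forall>y\<in>set ys. (ext g y, ext h y) \<in> W} | ys W. set ys \<subseteq> B \<and> W \<in> V}. c \<subseteq> b"
      using D(1) unfolding bT_def by blast
  next
    fix b assume "b \<in> {{(g, h) \<in> G \<times> G. \<forall>y\<in>set ys. (ext g y, ext h y) \<in> W} | ys W. set ys \<subseteq> B \<and> W \<in> V}"
    then obtain ys D where b: "b = bT ys D" "set ys \<subseteq> B" "D \<in> V" unfolding bT_def by blast
    obtain xs W where "W \<in> UX G" "bU xs W \<subseteq> b" using multi[OF b(3) b(2)] b(1) by blast
    thus "\<exists>c\<in>{{(g, h) \<in> G \<times> G. \<forall>x\<in>set xs. (g x, h x) \<in> W} | xs W. W \<in> UX G}. c \<subseteq> b"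
      unfolding bU_def by blast
  qed
  have eq2: "UGt G B V ext = gen_unif G {{(g,h) \<in> G \<times> G. \<forall>i\<in>set ys. (restrict (ext g) B i, restrict (ext h) B i) \<in> D} | ys D. set ys \<subseteq> B \<and> D \<in> V}"
    unfolding UGt_def
  proof (rule gen_unif_eq)
    fix b assume "b \<in> {{(g, h) \<in> G \<times> G. \<forall>y\<in>set ys. (ext g y, ext h y) \<in> W} | ys W. set ys \<subseteq> B \<and> W \<in> V}"
    then obtain ys D where b: "b = {(g, h) \<in> G \<times> G. \<forall>y\<in>set ys. (ext g y, ext h y) \<in> D}" "set ys \<subseteq> B" "D \<in> V" by blast
    have "{(g,h) \<in> G \<times> G. \<forall>i\<in>set ys. (restrict (ext g) B i, restrict (ext h) B i) \<in> D} = b"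
      unfolding b(1) using b(2) by auto
    thus "\<exists>c\<in>{{(g,h) \<in> G \<times> G. \<forall>i\<in>set ys. (restrict (ext g) B i, restrict (ext h) B i) \<in> D} | ys D. set ys \<subseteq> B \<and> D \<in> V}. c \<subseteq> b"
      using b(2,3) by blast
  next
    fix b assume "b \<in> {{(g,h) \<in> G \<times> G. \<forall>i\<in>set ys. (restrict (ext g) B i, restrict (ext h) B i) \<in> D} | ys D. set ys \<subseteq> B \<and> D \<in> V}"
    then obtain ys D where b: "b = {(g,h) \<in> G \<times> G. \<forall>i\<in>set ys. (restrict (ext g) B i, restrict (ext h) B i) \<in> D}" "set ys \<subseteq> B" "D \<in> V" by blast
    have "{(g, h) \<in> G \<times> G. \<forall>y\<in>set ys. (ext g y, ext h y) \<in> D} = b"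
      unfolding b(1) using b(2) by auto
    thus "\<exists>c\<in>{{(g, h) \<in> G \<times> G. \<forall>y\<in>set ys. (ext g y, ext h y) \<in> W} | ys W. set ys \<subseteq> B \<and> W \<in> V}. c \<subseteq> b"
      using b(2,3) by blast
  qed
  show ?thesis
  proof
    show "UG G = UGt G B V ext" by (fact eq1)
    show "let C = unif_closure (Pi\<^sub>E B (\<lambda>_. B)) (prod_unif B B V) ((\<lambda>g. restrict (ext g) B) ` G)
        in is_completion G (roelcke_unif G) (\<lambda>g. restrict (ext g) B) C (restrict_unif C (prod_unif B B V))"
      unfolding Let_def
    proof (rule completion_general[OF completionD(1-3)[OF c]])
      show "restrict (ext g) B \<in> Pi\<^sub>E B (\<lambda>_. B)" if g: "g \<in> G" for g
      proof -
        have "ext g ` B \<subseteq> B" using hext g unfolding unif_continuous_def by blast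
        thus ?thesis by auto
      qed
      show "inj_on (\<lambda>g. restrict (ext g) B) G"
      proof (rule inj_onI)
        fix g h assume g: "g \<in> G" and h: "h \<in> G" and eq: "restrict (ext g) B = restrict (ext h) B"
        have "e (g x) = e (h x)" for x
        proof -
          have "e x \<in> B" by (rule completionD(5)[OF c])
          hence "ext g (e x) = ext h (e x)" using eq by (metis restrict_apply')
          thus ?thesis using ext_e[OF g] ext_e[OF h] by simp
        qed
        hence "g x = h x" for x using completionD(4)[OF c] by (meson injD)
        thus "g = h" by (rule ext)
      qed
      show "roelcke_unif G = gen_unif G {{(g,h) \<in> G \<times> G. \<forall>i\<in>set ys. (restrict (ext g) B i, restrict (ext h) B i) \<in> D} | ys D. set ys \<subseteq> B \<and> D \<in> V}"
        using rU eq1 eq2 by simp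
    qed simp
  qed
qed


theorem theorem4p1:
  fixes G :: "('a \<Rightarrow> 'a) set"
  assumes "infinite (UNIV :: 'a set)"
    and "perm_group G"
  shows
   "((\<forall>xs g h. g \<in> G \<longrightarrow> h \<in> G \<longrightarrow>
        (\<forall>x\<in>set xs. \<exists>f\<in>St G xs. h x = f (g x)) \<longrightarrow>
        (\<exists>f\<in>St G xs. \<exists>s\<in>St G xs. h = f \<circ> (g \<circ> s)))
      \<longrightarrow> roelcke_unif G = UG G)
    \<and>
    (\<forall>(e :: 'a \<Rightarrow> 'b) B \<V>.
       is_completion UNIV (UX G) e B \<V> \<longrightarrow>
       roelcke_unif G = UG G \<longrightarrow> totally_bounded_unif UNIV (UX G) \<longrightarrow>
       totally_bounded_unif G (roelcke_unif G) \<and>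
       (let C = unif_closure (Pi\<^sub>E UNIV (\<lambda>_. B)) (prod_unif UNIV B \<V>) ((\<lambda>g. e \<circ> g) ` G)
        in is_completion G (roelcke_unif G) (\<lambda>g. e \<circ> g) C
             (restrict_unif C (prod_unif UNIV B \<V>))))
    \<and>
    (\<forall>(e :: 'a \<Rightarrow> 'b) B \<V> ext.
       is_completion UNIV (UX G) e B \<V> \<longrightarrow>
       (\<forall>g\<in>G. (\<forall>x. ext g (e x) = e (g x)) \<and> unif_continuous B \<V> B \<V> (ext g)) \<longrightarrow>
       roelcke_unif G = UG G \<longrightarrow> totally_bounded_unif UNIV (UX G) \<longrightarrow>
       (\<forall>x \<in> B - e ` UNIV. \<forall>U\<in>\<V>. \<exists>xs V. V \<in> \<V> \<and>
          (\<forall>g\<in>G. {h \<in> G. \<forall>y\<in>set xs. (e (g y), e (h y)) \<in> V}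
                   \<subseteq> {h \<in> G. (ext g x, ext h x) \<in> U})) \<longrightarrow>
       UG G = UGt G B \<V> ext \<and>
       (let C = unif_closure (Pi\<^sub>E B (\<lambda>_. B)) (prod_unif B B \<V>) ((\<lambda>g. restrict (ext g) B) ` G)
        in is_completion G (roelcke_unif G) (\<lambda>g. restrict (ext g) B) C
             (restrict_unif C (prod_unif B B \<V>))))"
proof (intro conjI)
  show "(\<forall>xs g h. g \<in> G \<longrightarrow> h \<in> G \<longrightarrow>
        (\<forall>x\<in>set xs. \<exists>f\<in>St G xs. h x = f (g x)) \<longrightarrow>
        (\<exists>f\<in>St G xs. \<exists>s\<in>St G xs. h = f \<circ> (g \<circ> s)))
      \<longrightarrow> roelcke_unif G = UG G"
    by (intro impI) (rule part1[OF assms(2)])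
next
  show "\<forall>(e :: 'a \<Rightarrow> 'b) B \<V>.
       is_completion UNIV (UX G) e B \<V> \<longrightarrow>
       roelcke_unif G = UG G \<longrightarrow> totally_bounded_unif UNIV (UX G) \<longrightarrow>
       totally_bounded_unif G (roelcke_unif G) \<and>
       (let C = unif_closure (Pi\<^sub>E UNIV (\<lambda>_. B)) (prod_unif UNIV B \<V>) ((\<lambda>g. e \<circ> g) ` G)
        in is_completion G (roelcke_unif G) (\<lambda>g. e \<circ> g) C
             (restrict_unif C (prod_unif UNIV B \<V>)))"
    by (intro allI impI) (rule part2[OF assms(2)]; assumption)
next
  show "\<forall>(e :: 'a \<Rightarrow> 'b) B \<V> ext.
       is_completion UNIV (UX G) e B \<V> \<longrightarrow>
       (\<forall>g\<in>G. (\<forall>x. ext g (e x) = e (g x)) \<and> unif_continuous B \<V> B \<V> (ext g)) \<longrightarrow>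
       roelcke_unif G = UG G \<longrightarrow> totally_bounded_unif UNIV (UX G) \<longrightarrow>
       (\<forall>x \<in> B - e ` UNIV. \<forall>U\<in>\<V>. \<exists>xs V. V \<in> \<V> \<and>
          (\<forall>g\<in>G. {h \<in> G. \<forall>y\<in>set xs. (e (g y), e (h y)) \<in> V}
                   \<subseteq> {h \<in> G. (ext g x, ext h x) \<in> U})) \<longrightarrow>
       UG G = UGt G B \<V> ext \<and>
       (let C = unif_closure (Pi\<^sub>E B (\<lambda>_. B)) (prod_unif B B \<V>) ((\<lambda>g. restrict (ext g) B) ` G)
        in is_completion G (roelcke_unif G) (\<lambda>g. restrict (ext g) B) C
             (restrict_unif C (prod_unif B B \<V>)))"
    by (intro allI impI) (rule part3[OF assms(2)]; assumption)
qed

end
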